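(* For $|u|<1$, \[ - \operatorname{Li}_2 \left( \frac{2 u^2 - 3 u + \sqrt{ u (4-3u)}}{2 (u-1)^2} \right) - \operatorname{Li}_2 \left( \frac{2 u^2 - 3 u - \sqrt{ u (4-3u)}}{2 (u-1)^2} \right) = \frac{3}{2} \ln^2 \left( 1 - \frac{u - \sqrt{(4 - 3 u) u}}{2 (u-1)} \right) - \operatorname{Li}_2 \left( \frac{u}{u - 1} \right). \]
   Context: $\operatorname{Li}_2(x)=\sum_{n\ge1}x^n/n^2$ is the dilogarithm (analytically continued); square roots and logarithms are principal branches. *)

theory Defs
  imports "HOL-Analysis.Analysis"
begin

text \<open>Dilogarithm, principal branch (cut along [1,infinity)):
  Li2 z = - integral_0^z Ln(1-t)/t dt along the straight segment, i.e.
  after substituting t = z s, Li2 z = - integral_0^1 Ln(1 - z s)/s ds.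
  For norm z \<le> 1 this equals the power series sum z^n/n^2.\<close>
definition Li2 :: "complex \<Rightarrow> complex" where
  "Li2 z = - integral {0..1::real} (\<lambda>s. Ln (1 - z * of_real s) / of_real s)"

end

theory Submission imports Defs "HOL-Complex_Analysis.Complex_Analysis" begin

definition S0 :: "complex set" where "S0 = {z. Im z \<noteq> 0 \<or> Re z < 1}"
definition gL :: "complex \<Rightarrow> complex" where "gL z = (if z = 0 then -1 else Ln (1 - z) / z)"

lemma open_S0: "open S0"
proof -
  have "S0 = {z. Im z \<noteq> 0} \<union> {z. Re z < 1}" by (auto simp: S0_def)
  moreover have "open {z. Im z \<noteq> 0}" by (intro open_Collect_neq continuous_intros)
  moreover have "open {z. Re z < 1}" by (intro open_Collect_less continuous_intros)
  ultimately show ?thesis by (metis open_Un)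
qed

lemma S0_iff: "z \<in> S0 \<longleftrightarrow> 1 - z \<notin> \<real>\<^sub>\<le>\<^sub>0"
  by (auto simp: S0_def complex_nonpos_Reals_iff)

lemma seg_S0: assumes "y \<in> S0" shows "closed_segment 0 y \<subseteq> S0"
proof
  fix w assume "w \<in> closed_segment 0 y"
  then obtain t where t: "0 \<le> t" "t \<le> 1" "w = t *\<^sub>R y" by (auto simp: closed_segment_def)
  show "w \<in> S0"
  proof (cases "t = 0")
    case True then show ?thesis using t by (simp add: S0_def)
  next
    case False
    then have "t > 0" using t by simp
    show ?thesis using assms t \<open>t > 0\<close>
      apply (simp add: S0_def)
      by (smt (verit, ccfv_threshold) mult_le_cancel_left1 mult_nonneg_nonneg)
  qed
qed

lemma Ln1_deriv: "((\<lambda>z. Ln (1 - z)) has_field_derivative -1) (at 0)"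
proof -
  have "((\<lambda>z. Ln (1 - z)) has_field_derivative (inverse (1 - 0)) * (-1)) (at 0)"
    by (rule DERIV_chain2[where f=Ln]) (auto intro!: derivative_eq_intros has_field_derivative_Ln)
  then show ?thesis by simp
qed

lemma gL_hol: "gL holomorphic_on S0"
proof (rule no_isolated_singularity'[where K="{0}"])
  show "open S0" by (rule open_S0)
  show "finite {0::complex}" by simp
  have "(\<lambda>z. Ln (1 - z) / z) holomorphic_on (S0 - {0})"
    by (intro holomorphic_intros) (auto simp: S0_iff)
  then show "gL holomorphic_on (S0 - {0})"
    by (rule holomorphic_transform) (auto simp: gL_def)
  fix z :: complex assume "z \<in> {0}"
  then have z: "z = 0" by simp
  have "((\<lambda>y. (Ln (1 - y) - Ln (1 - 0)) / (y - 0)) \<longlongrightarrow> -1) (at 0)"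
    using Ln1_deriv by (simp add: DERIV_def)
  then have "(gL \<longlongrightarrow> -1) (at 0)"
    by (rule Lim_transform_eventually) (auto simp: eventually_at gL_def intro!: exI[of _ 1])
  then show "(gL \<longlongrightarrow> gL z) (at z within S0)"
    using z tendsto_within_subset[OF _ subset_UNIV] by (simp add: gL_def)
qed

lemma gL_cont: "continuous_on S0 gL"
  using gL_hol holomorphic_on_imp_continuous_on by blast

lemma prim_deriv:
  assumes "x \<in> S0"
  shows "((\<lambda>x. contour_integral (linepath 0 x) gL) has_field_derivative gL x) (at x)"
proof (rule triangle_contour_integrals_starlike_primitive[OF gL_cont _ open_S0 assms])
  show "0 \<in> S0" by (simp add: S0_def)
  show "\<And>y. y \<in> S0 \<Longrightarrow> closed_segment 0 y \<subseteq> S0" by (rule seg_S0)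
  fix b c assume "closed_segment b c \<subseteq> S0"
  moreover have "(0::complex) \<in> S0" by (simp add: S0_def)
  ultimately have "convex hull {0, b, c} \<subseteq> S0"
    using starlike_convex_subset[of 0 S0 b c] seg_S0 by blast
  then have "gL holomorphic_on convex hull {0, b, c}"
    using gL_hol holomorphic_on_subset by blast
  then have "(gL has_contour_integral 0) (linepath 0 b +++ linepath b c +++ linepath c 0)"
    by (rule Cauchy_theorem_triangle)
  then show "contour_integral (linepath 0 b) gL + contour_integral (linepath b c) gL +
          contour_integral (linepath c 0) gL = 0"
    by (rule has_chain_integral_chain_integral3)
qed

lemma Li2_rep:
  assumes "z \<in> S0"
  shows "Li2 z = - contour_integral (linepath 0 z) gL"
proof (cases "z = 0")
  case True
  then show ?thesis by (simp add: Li2_def)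
next
  case False
  have "continuous_on (closed_segment 0 z) gL"
    using gL_cont seg_S0[OF assms] continuous_on_subset by blast
  then have "gL contour_integrable_on linepath 0 z"
    by (rule contour_integrable_continuous_linepath)
  then have "(gL has_contour_integral contour_integral (linepath 0 z) gL) (linepath 0 z)"
    by (rule has_contour_integral_integral)
  then have "((\<lambda>s. gL (linepath 0 z s) * (z - 0)) has_integral contour_integral (linepath 0 z) gL) {0..1}"
    by (simp add: has_contour_integral_linepath)
  moreover have eq: "\<And>s. s \<in> {0..1} - {0} \<Longrightarrow> Ln (1 - z * of_real s) / of_real s = gL (linepath 0 z s) * (z - 0)"
  proof -
    fix s :: real assume s: "s \<in> {0..1} - {0}"
    then have s0: "s \<noteq> 0" by auto
    have lp: "linepath 0 z s = of_real s * z" by (simp add: linepath_def scaleR_conv_of_real)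
    have "of_real s * z \<noteq> 0" using s0 False by simp
    then have "gL (linepath 0 z s) = Ln (1 - of_real s * z) / (of_real s * z)" by (simp add: lp gL_def scaleR_conv_of_real)
    then show "Ln (1 - z * of_real s) / of_real s = gL (linepath 0 z s) * (z - 0)"
      using False s0 by (simp add: mult.commute)
  qed
  ultimately have "((\<lambda>s. Ln (1 - z * of_real s) / of_real s) has_integral contour_integral (linepath 0 z) gL) {0..1}"
    by (intro has_integral_spike_finite[of "{0}", OF _ eq]) auto
  then show ?thesis by (simp add: Li2_def integral_unique)
qed

lemma Li2_deriv:
  assumes "z \<in> S0"
  shows "(Li2 has_field_derivative - gL z) (at z)"
proof -
  have "((\<lambda>x. - contour_integral (linepath 0 x) gL) has_field_derivative - gL z) (at z)"
    using prim_deriv[OF assms] by (rule DERIV_minus)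
  then show ?thesis
    by (rule has_field_derivative_transform_within_open[OF _ open_S0 assms]) (simp add: Li2_rep)
qed

lemma Li2_0: "Li2 0 = 0" by (simp add: Li2_def)

definition U :: "complex set" where "U = {x. 1 < Re x} \<union> {x. Im x ^ 2 < Re x}"

lemma open_U: "open U"
  unfolding U_def by (intro open_Un open_Collect_less continuous_intros)

lemma convex_par: "convex {x::complex. Im x ^ 2 < Re x}"
proof (unfold convex_alt, intro ballI allI impI)
  fix x y :: complex and t :: real
  assume x: "x \<in> {x. Im x ^ 2 < Re x}" and y: "y \<in> {x. Im x ^ 2 < Re x}" and t: "0 \<le> t \<and> t \<le> 1"
  define a where "a = Im x"
  define b where "b = Im y"
  have ha: "a^2 < Re x" and hb: "b^2 < Re y" using x y by (auto simp: a_def b_def)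
  have "((1-t)*a + t*b)^2 = (1-t)*a^2 + t*b^2 - t*(1-t)*(a-b)^2"
    by (simp add: power2_eq_square algebra_simps)
  also have "\<dots> \<le> (1-t)*a^2 + t*b^2" using t by simp
  also have "\<dots> < (1-t)*Re x + t * Re y"
  proof (cases "t = 0")
    case True then show ?thesis using ha by simp
  next
    case False
    then have "t > 0" using t by simp
    have "(1-t)*a^2 \<le> (1-t)*Re x" using ha t by (intro mult_left_mono) auto
    moreover have "t*b^2 < t * Re y" using hb \<open>t>0\<close> by simp
    ultimately show ?thesis by simp
  qed
  finally show "(1 - t) *\<^sub>R x + t *\<^sub>R y \<in> {x. Im x ^ 2 < Re x}"
    by (simp add: a_def b_def)
qed

lemma convex_halfp: "convex {x::complex. 1 < Re x}"
  by (rule convex_halfspace_Re_gt)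

lemma connected_U: "connected U"
proof -
  have "(2::complex) \<in> {x. 1 < Re x} \<inter> {x. Im x ^ 2 < Re x}" by simp
  then have ne: "{x. 1 < Re x} \<inter> {x::complex. Im x ^ 2 < Re x} \<noteq> {}" by blast
  show ?thesis unfolding U_def
    by (rule connected_Un[OF convex_connected[OF convex_halfp] convex_connected[OF convex_par] ne])
qed

lemma U_props:
  assumes "x \<in> U"
  shows "0 < Re x" "0 < Re (x - 1 + inverse x)"
proof -
  define p where "p = Re x"
  define q where "q = Im x"
  have pq: "p > 1 \<or> q^2 < p" using assms by (auto simp: U_def p_def q_def)
  then show "0 < Re x" unfolding p_def[symmetric] by (smt (verit) zero_le_power2)
  then have p0: "p > 0" by (simp add: p_def)
  have N: "p^2 + q^2 > 0" using p0 by (smt (verit) zero_le_power2 zero_less_power2)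
  have re: "Re (x - 1 + inverse x) = p - 1 + p / (p^2 + q^2)"
    by (simp add: p_def q_def power2_eq_square)
  show "0 < Re (x - 1 + inverse x)"
  proof (cases "p > 1")
    case True
    then show ?thesis unfolding re using N p0 by (smt (verit) divide_pos_pos)
  next
    case False
    then have q2: "q^2 < p" using pq by simp
    have "p^2 + q^2 < p^2 + p" using q2 by simp
    then have "p / (p^2+q^2) > p / (p^2 + p)" using N p0
      by (intro divide_strict_left_mono) auto
    moreover have "p / (p^2 + p) = 1 / (p + 1)"
    proof -
      have "p^2 + p = p * (p + 1)" by (simp add: power2_eq_square algebra_simps)
      then show ?thesis using p0 by simp
    qed
    moreover have "p - 1 + 1/(p+1) = p^2/(p+1)" using p0 by (simp add: power2_eq_square field_simps)
    moreover have "p^2/(p+1) > 0" using p0 by simp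
    ultimately show ?thesis unfolding re by linarith
  qed
qed

lemma Im_Ln_nonpos_pi: assumes "z \<noteq> 0" "z \<in> \<real>\<^sub>\<le>\<^sub>0" shows "Im (Ln z) = pi"
proof -
  have "Re z \<le> 0" "Im z = 0" using assms(2) by (auto simp: complex_nonpos_Reals_iff)
  moreover have "Re z \<noteq> 0" using assms(1) \<open>Im z = 0\<close> complex_eq_iff by force
  ultimately show ?thesis using Im_Ln_eq_pi[OF assms(1)] by simp
qed

lemma Ln_mult_pos:
  assumes "0 < Re v" "0 < Re w"
  shows "Ln (v * w) = Ln v + Ln w" "v * w \<notin> \<real>\<^sub>\<le>\<^sub>0"
proof -
  have v0: "v \<noteq> 0" and w0: "w \<noteq> 0" using assms by auto
  have a: "\<bar>Im (Ln v)\<bar> < pi/2" "\<bar>Im (Ln w)\<bar> < pi/2"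
    using assms Re_Ln_pos_lt_imp by auto
  show eq: "Ln (v * w) = Ln v + Ln w"
    using a by (intro Ln_times_simple v0 w0) auto
  have "abs (Im (Ln (v * w))) < pi" using a by (simp add: eq)
  then have "Im (Ln (v * w)) \<noteq> pi" by auto
  moreover have "v * w \<noteq> 0" using v0 w0 by simp
  ultimately show "v * w \<notin> \<real>\<^sub>\<le>\<^sub>0"
    using Im_Ln_nonpos_pi by blast
qed

definition fF :: "complex \<Rightarrow> complex" where
  "fF x = - Li2 (x - x^2) - Li2 ((x-1)/x^2) - 3/2 * (Ln x)^2 + Li2 (- ((x-1)^2) / x)"

lemma U_facts:
  assumes "x \<in> U"
  defines "y \<equiv> x - 1 + inverse x"
  shows "x \<noteq> 0" "x \<notin> \<real>\<^sub>\<le>\<^sub>0"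
    "x - x^2 \<in> S0" "(x-1)/x^2 \<in> S0" "- ((x-1)^2) / x \<in> S0"
    "Ln (1 - (x - x^2)) = Ln x + Ln y"
    "Ln (1 - (x-1)/x^2) = Ln y - Ln x"
    "Ln (1 - (- ((x-1)^2) / x)) = Ln y"
proof -
  have px: "0 < Re x" and py: "0 < Re y" using U_props[OF assms(1)] by (auto simp: y_def)
  show x0: "x \<noteq> 0" using px by auto
  show xn: "x \<notin> \<real>\<^sub>\<le>\<^sub>0" using px by (auto simp: complex_nonpos_Reals_iff)
  have "Re x * Re x + Im x * Im x > 0" using px by (simp add: add_pos_nonneg)
  then have pix: "0 < Re (inverse x)" using px by (simp add: power2_eq_square)
  have e1: "1 - (x - x^2) = x * y" using x0 by (simp add: y_def field_simps power2_eq_square)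
  have e2: "1 - (x-1)/x^2 = y * inverse x" using x0 by (simp add: y_def field_simps power2_eq_square)
  have e3: "1 - (- ((x-1)^2) / x) = y" using x0 by (simp add: y_def field_simps power2_eq_square)
  show "x - x^2 \<in> S0" unfolding S0_iff e1 using Ln_mult_pos(2)[OF px py] .
  show "(x-1)/x^2 \<in> S0" unfolding S0_iff e2 using Ln_mult_pos(2)[OF py pix] .
  have yn: "y \<notin> \<real>\<^sub>\<le>\<^sub>0" using py by (auto simp: complex_nonpos_Reals_iff)
  show "- ((x-1)^2) / x \<in> S0" unfolding S0_iff e3 using yn .
  show "Ln (1 - (x - x^2)) = Ln x + Ln y" unfolding e1 using Ln_mult_pos(1)[OF px py] .
  show "Ln (1 - (x-1)/x^2) = Ln y - Ln x" unfolding e2 using Ln_mult_pos(1)[OF py pix] Ln_inverse[OF xn] by simp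
  show "Ln (1 - (- ((x-1)^2) / x)) = Ln y" unfolding e3 ..
qed

lemma dA: "((\<lambda>x::complex. x - x^2) has_field_derivative 1 - 2*x) (at x)"
  by (auto intro!: derivative_eq_intros)

lemma dB: assumes "x \<noteq> 0" shows "((\<lambda>x::complex. (x-1)/x^2) has_field_derivative (2-x)/x^3) (at x)"
  using assms by (auto intro!: derivative_eq_intros simp: field_simps power2_eq_square power3_eq_cube)

lemma dC: assumes "x \<noteq> 0" shows "((\<lambda>x::complex. - ((x-1)^2) / x) has_field_derivative - (x-1)*(x+1)/x^2) (at x)"
  using assms by (auto intro!: derivative_eq_intros simp: field_simps power2_eq_square power3_eq_cube)

definition Df :: "complex \<Rightarrow> complex" where
  "Df x = - (- gL (x - x^2) * (1 - 2*x)) - (- gL ((x-1)/x^2) * ((2-x)/x^3))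
          - 3/2 * (of_nat 2 * (inverse x * Ln x ^ (2 - Suc 0)))
          + (- gL (- ((x-1)^2) / x) * (- (x-1)*(x+1)/x^2))"

lemma fF_deriv:
  assumes "x \<in> U"
  shows "(fF has_field_derivative Df x) (at x)"
proof -
  note F = U_facts[OF assms]
  have h1: "((\<lambda>x. Li2 (x - x^2)) has_field_derivative - gL (x - x^2) * (1 - 2*x)) (at x)"
    by (rule DERIV_chain2[OF Li2_deriv[OF F(3)] dA])
  have h2: "((\<lambda>x. Li2 ((x-1)/x^2)) has_field_derivative - gL ((x-1)/x^2) * ((2-x)/x^3)) (at x)"
    by (rule DERIV_chain2[OF Li2_deriv[OF F(4)] dB[OF F(1)]])
  have h3: "((\<lambda>x. Li2 (- ((x-1)^2) / x)) has_field_derivative - gL (- ((x-1)^2) / x) * (- (x-1)*(x+1)/x^2)) (at x)"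
    by (rule DERIV_chain2[OF Li2_deriv[OF F(5)] dC[OF F(1)]])
  have h4: "(Ln has_field_derivative inverse x) (at x)"
    by (rule has_field_derivative_Ln[OF F(2)])
  have h5: "((\<lambda>x. Ln x ^ 2) has_field_derivative of_nat 2 * (inverse x * Ln x ^ (2 - Suc 0))) (at x)"
    by (rule DERIV_power[OF h4])
  have "((\<lambda>x. - Li2 (x - x^2) - Li2 ((x-1)/x^2) - 3/2 * (Ln x)^2 + Li2 (- ((x-1)^2) / x)) has_field_derivative Df x) (at x)"
    unfolding Df_def
    by (intro DERIV_add DERIV_diff DERIV_minus DERIV_cmult h1 h2 h3 h5)
  then show ?thesis unfolding fF_def[abs_def] .
qed

lemma Df_zero:
  assumes "x \<in> U" "x \<noteq> 1"
  shows "Df x = 0"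
proof -
  note F = U_facts[OF assms(1)]
  define y where "y = x - 1 + inverse x"
  have x0: "x \<noteq> 0" by (rule F(1))
  have x1: "x - 1 \<noteq> 0" using assms(2) by simp
  have nA: "x - x^2 \<noteq> 0" using x0 x1 by (simp add: power2_eq_square right_diff_distrib[symmetric])
  have nB: "(x-1)/x^2 \<noteq> 0" using x0 x1 by simp
  have nC: "- ((x-1)^2) / x \<noteq> 0" using x0 x1 by simp
  have gA: "gL (x - x^2) = (Ln x + Ln y) / (x - x^2)" using nA F(6) by (simp add: gL_def y_def)
  have gB: "gL ((x-1)/x^2) = (Ln y - Ln x) / ((x-1)/x^2)" using nB F(7) by (simp add: gL_def y_def)
  have gC: "gL (- ((x-1)^2) / x) = Ln y / (- ((x-1)^2) / x)" using nC F(8) by (simp add: gL_def y_def)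
  have "Df x = (Ln x + Ln y) / (x - x^2) * (1 - 2*x) + (Ln y - Ln x) / ((x-1)/x^2) * ((2-x)/x^3)
          - 3 * Ln x / x - Ln y / (- ((x-1)^2) / x) * (- (x-1)*(x+1)/x^2)"
    unfolding Df_def gA gB gC by (simp add: field_simps)
  also have "\<dots> = 0"
  proof -
    define a where "a = Ln x"
    define b where "b = Ln y"
    define D where "D = x * (x - 1)"
    have D0: "D \<noteq> 0" using x0 x1 by (simp add: D_def)
    have xx: "x - x^2 = - D" by (simp add: D_def power2_eq_square algebra_simps)
    have t1: "(a + b) / (x - x^2) * (1 - 2*x) = (- (a+b)*(1-2*x)) / D"
      unfolding xx using D0 by (simp add: field_simps)
    have t2: "(b - a) / ((x-1)/x^2) * ((2-x)/x^3) = ((b-a)*(2-x)) / D"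
      using x0 x1 by (simp add: D_def field_simps power2_eq_square power3_eq_cube)
    have t3: "3 * a / x = (3*a*(x-1)) / D"
      using x0 x1 by (simp add: D_def field_simps)
    have t4: "b / (- ((x-1)^2) / x) * (- (x-1)*(x+1)/x^2) = (b*(x+1)) / D"
    proof -
      have x1': "(x-1)^2 \<noteq> 0" using x1 by simp
      have "b / (- ((x-1)^2) / x) = - (b * x) / (x-1)^2" using x0 x1' by (simp add: field_simps)
      also have "\<dots> * (- (x-1)*(x+1)/x^2) = ((- (b * x)) * (- (x-1)*(x+1))) / ((x-1)^2 * x^2)"
        by (rule times_divide_times_eq)
      also have "\<dots> = (b * x * ((x-1)*(x+1))) / ((x-1)^2 * x^2)"
        by (simp add: algebra_simps)
      also have "\<dots> = (b*(x+1)) / D"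
        using x0 x1 x1' by (simp add: D_def field_simps) (simp add: power2_eq_square algebra_simps)
      finally show ?thesis .
    qed
    have "(a + b) / (x - x^2) * (1 - 2*x) + (b - a) / ((x-1)/x^2) * ((2-x)/x^3)
          - 3 * a / x - b / (- ((x-1)^2) / x) * (- (x-1)*(x+1)/x^2)
          = ((- (a+b)*(1-2*x)) + (b-a)*(2-x) - 3*a*(x-1) - b*(x+1)) / D"
      unfolding t1 t2 t3 t4 by (simp add: diff_divide_distrib add_divide_distrib)
    also have "\<dots> = 0" by (simp add: algebra_simps)
    finally have "(a + b) / (x - x^2) * (1 - 2*x) + (b - a) / ((x-1)/x^2) * ((2-x)/x^3)
          - 3 * a / x - b / (- ((x-1)^2) / x) * (- (x-1)*(x+1)/x^2) = 0" .
    then show ?thesis by (simp add: a_def b_def)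
  qed
  finally show ?thesis .
qed

lemma fF_zero:
  assumes "x \<in> U" shows "fF x = 0"
proof -
  have cont: "continuous_on U fF"
    using fF_deriv DERIV_isCont continuous_at_imp_continuous_on by blast
  have d0: "\<forall>x\<in>U - {1}. DERIV fF x :> 0"
    using fF_deriv Df_zero by fastforce
  obtain c where c: "\<And>x. x \<in> U \<Longrightarrow> fF x = c"
    using DERIV_zero_connected_constant[OF connected_U open_U _ cont d0] by blast
  have "1 \<in> U" by (simp add: U_def)
  then have "c = fF 1" using c by simp
  also have "\<dots> = 0" by (simp add: fF_def Li2_0)
  finally show ?thesis using c assms by simp
qed

lemma inU:
  assumes "3/2 < Re (x + inverse x)"
  shows "x \<in> U"
proof -
  define p where "p = Re x"
  define q where "q = Im x"
  have x0: "x \<noteq> 0" using assms by auto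
  have N: "p^2 + q^2 > 0" using x0 by (simp add: p_def q_def complex_eq_iff add_pos_nonneg sum_power2_gt_zero_iff)
  have h: "3/2 < p + p / (p^2 + q^2)" using assms by (simp add: p_def q_def power2_eq_square)
  show ?thesis
  proof (rule ccontr)
    assume "x \<notin> U"
    then have a: "p \<le> 1" "p \<le> q^2" by (auto simp: U_def p_def q_def)
    have p0: "p > 0"
    proof (rule ccontr)
      assume "\<not> p > 0"
      then have "p / (p^2+q^2) \<le> 0" using N by (simp add: divide_nonpos_pos)
      then show False using h \<open>\<not> p > 0\<close> by linarith
    qed
    have "p^2 + p \<le> p^2 + q^2" using a by simp
    moreover have pp: "p^2 + p > 0" using p0 by (simp add: add_nonneg_pos)
    ultimately have "p / (p^2 + q^2) \<le> p / (p^2 + p)" using p0 N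
      by (intro divide_left_mono) (auto simp: mult_pos_pos)
    moreover have "p / (p^2 + p) = 1 / (p + 1)"
    proof -
      have "p^2 + p = p * (p + 1)" by (simp add: power2_eq_square algebra_simps)
      then show ?thesis using p0 by simp
    qed
    moreover have "p + 1/(p+1) - 3/2 = (2*p+1)*(p-1) / (2*(p+1))"
      using p0 by (simp add: field_simps)
    moreover have "(2*p+1)*(p-1) / (2*(p+1)) \<le> 0"
      using p0 a by (intro divide_nonpos_pos mult_nonneg_nonpos) auto
    ultimately show False using h by linarith
  qed
qed

lemma Re_inv_half:
  assumes "norm u < 1"
  shows "1/2 < Re (inverse (1 - u))"
proof -
  define a where "a = Re (1 - u)"
  define b where "b = Im (1 - u)"
  have "norm u ^ 2 < 1" using assms by (simp add: power_less_one_iff abs_less_iff) 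
  moreover have "norm u ^ 2 = (1 - a)^2 + b^2" by (simp add: a_def b_def cmod_power2)
  ultimately have h: "a^2 + b^2 < 2 * a" by (simp add: power2_eq_square algebra_simps)
  then have a0: "a > 0" by (smt (verit) zero_le_power2)
  have N: "a^2 + b^2 > 0" using a0 by (simp add: add_pos_nonneg)
  have "Re (inverse (1 - u)) = a / (a^2 + b^2)" by (simp add: a_def b_def power2_eq_square)
  also have "\<dots> > 1/2" using h N by (simp add: field_simps)
  finally show ?thesis .
qed

theorem theorem3:
  fixes u :: complex
  assumes "norm u < 1"
  shows "- Li2 ((2*u^2 - 3*u + csqrt (u*(4 - 3*u))) / (2*(u - 1)^2))
         - Li2 ((2*u^2 - 3*u - csqrt (u*(4 - 3*u))) / (2*(u - 1)^2))
       = 3/2 * (Ln (1 - (u - csqrt ((4 - 3*u)*u)) / (2*(u - 1))))^2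
         - Li2 (u / (u - 1))"
proof -
  define r where "r = csqrt (u*(4 - 3*u))"
  have r2: "r^2 = u*(4 - 3*u)" by (simp add: r_def)
  have r': "csqrt ((4 - 3*u)*u) = r" by (simp add: r_def mult.commute)
  have u1: "u - 1 \<noteq> 0" using assms by auto
  define x where "x = (u - 2 + r) / (2*(u-1))"
  define x' where "x' = (u - 2 - r) / (2*(u-1))"
  have xx: "x * x' = 1"
  proof -
    have "x * x' = ((u-2)^2 - r^2) / (4*(u-1)^2)" using u1
      by (simp add: x_def x'_def field_simps power2_eq_square)
    also have "\<dots> = 1"
    proof -
      have num: "(u-2)^2 - r^2 = 4*(u-1)^2" using r2 by algebra
      show ?thesis using u1 unfolding num by simp
    qed
    finally show ?thesis .
  qed
  have x0: "x \<noteq> 0" using xx by auto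
  have ix: "inverse x = x'" using xx by (metis inverse_unique)
  have sum: "x + inverse x = 1 + inverse (1 - u)"
  proof -
    have "x + x' = (2*(u-2)) / (2*(u-1))" unfolding x_def x'_def by (simp add: add_divide_distrib[symmetric])
    also have "\<dots> = (u-2)/(u-1)" by (rule mult_divide_mult_cancel_left) simp
    also have "\<dots> = 1 + inverse (1 - u)"
    proof -
      have "1 - u \<noteq> 0" using u1 by auto
      then have "1 + inverse (1 - u) = ((1 - u) + 1) / (1 - u)" by (simp add: field_simps)
      also have "\<dots> = (u-2)/(u-1)" using u1 by (simp add: frac_eq_eq) (simp add: algebra_simps)
      finally show ?thesis by simp
    qed
    finally show ?thesis unfolding ix .
  qed
  have "3/2 < Re (x + inverse x)" unfolding sum using Re_inv_half[OF assms] by simp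
  then have xU: "x \<in> U" by (rule inU)
  define D where "D = 2*(u-1)"
  define N where "N = u - 2 + r"
  define M where "M = u - 2 - r"
  have D0: "D \<noteq> 0" using u1 by (simp add: D_def)
  have xN: "x = N/D" by (simp add: x_def N_def D_def)
  have xM: "inverse x = M/D" by (simp add: ix x'_def M_def D_def)
  have eA: "(2*u^2 - 3*u + r) / (2*(u - 1)^2) = x - x^2"
  proof -
    have "x - x^2 = (D*N - N^2)/D^2" unfolding xN using D0 by (simp add: field_simps power2_eq_square)
    also have "D*N - N^2 = 2*(2*u^2 - 3*u + r)" unfolding D_def N_def using r2 by algebra
    also have "D^2 = 2*(2*(u-1)^2)" unfolding D_def by algebra
    also have "2*(2*u^2 - 3*u + r) / (2*(2*(u-1)^2)) = (2*u^2 - 3*u + r) / (2*(u-1)^2)"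
      by (intro mult_divide_mult_cancel_left) simp
    finally show ?thesis by simp
  qed
  have eB: "(2*u^2 - 3*u - r) / (2*(u - 1)^2) = (x-1)/x^2"
  proof -
    have "(x-1)/x^2 = (x-1) * (inverse x)^2" by (simp add: divide_inverse power_inverse)
    also have "\<dots> = ((N - D) * M^2) / D^3" unfolding xM using D0 by (simp add: xN field_simps power2_eq_square power3_eq_cube)
    also have "(N - D) * M^2 = 4*(u-1)*(2*u^2 - 3*u - r)" unfolding D_def N_def M_def using r2 by algebra
    also have "D^3 = 4*(u-1)*(2*(u-1)^2)" unfolding D_def by algebra
    also have "4*(u-1)*(2*u^2 - 3*u - r) / (4*(u-1)*(2*(u-1)^2)) = (2*u^2 - 3*u - r) / (2*(u-1)^2)"
      using u1 by (intro mult_divide_mult_cancel_left) simp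
    finally show ?thesis by simp
  qed
  have eC: "u / (u - 1) = - ((x-1)^2) / x"
  proof -
    have "- ((x-1)^2) / x = - ((x-1)^2) * inverse x" by (simp add: divide_inverse)
    also have "\<dots> = (- ((N - D)^2 * M)) / D^3" unfolding xM using D0 by (simp add: xN field_simps power2_eq_square power3_eq_cube)
    also have "- ((N - D)^2 * M) = (4*(u-1)^2) * (2*u)" unfolding D_def N_def M_def using r2 by algebra
    also have "D^3 = (4*(u-1)^2) * (2*(u-1))" unfolding D_def by algebra
    also have "(4*(u-1)^2) * (2*u) / ((4*(u-1)^2) * (2*(u-1))) = u / (u-1)"
      using u1 by (simp only: mult_divide_mult_cancel_left_if) simp
    finally show ?thesis by simp
  qed
  have eL: "1 - (u - r) / (2*(u - 1)) = x"
    using u1 by (simp add: x_def field_simps)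
  have "fF x = 0" by (rule fF_zero[OF xU])
  then show ?thesis
    unfolding r_def[symmetric] r' eA eB eC eL fF_def by (simp add: algebra_simps)
qed

end
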